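(* For every integer $k\ge1$ and every $\tau\in T$: if $\mathfrak{h}(\tau)=k$ then $\rho(\tau)\ge\frac k2$; if $\mathfrak{r}(\tau)=k$ then $\rho(\tau)\ge k-\frac12$; if $\mathfrak{d}(\tau)=k$ then $\rho(\tau)\ge2^{k-1}-\frac12$. The same implications hold with $\tau$ replaced by $u\in U_f$ and $\mathfrak{h},\mathfrak{r},\mathfrak{d}$ replaced by $\mathfrak{h}',\mathfrak{r}',\mathfrak{d}'$.
   Context: Let $m\ge0$. $T$ is the set of $(m+1)$-colored rooted trees: the empty tree $\emptyset$ and all $\tau=[\tau_1,\dots,\tau_\kappa]_l$ with $l\in\{0,\dots,m\}$, $\kappa\ge0$, $\tau_1,\dots,\tau_\kappa\in T\setminus\{\emptyset\}$ (unordered), formed by joining the roots of the $\tau_j$ by edges to a new root of color $l$ ($\bullet_l$ when $\kappa=0$). Order: $\rho(\emptyset)=0$, $\rho([\tau_1,\dots,\tau_\kappa]_l)=\sum_j\rho(\tau_j)+1$ if $l=0$, and $=\sum_j\rho(\tau_j)+\frac12$ if $l\ge1$. $U_f$ is the set of trees $u=[\tau_1,\dots,\tau_\kappa]_f$ with $\kappa\ge0$, $\tau_j\in T\setminus\{\emptyset\}$ (a root labelled $f$), with $\rho(u)=\sum_j\rho(\tau_j)$; for $\mathfrak{g}:T\to\mathbb{N}$ put $\mathfrak{g}'(u)=\max_j\mathfrak{g}(\tau_j)$ (and $0$ for $\kappa=0$). Functions on $T$ (maxima over empty sets are $0$): height: $\mathfrak{h}(\emptyset)=0$, $\mathfrak{h}(\bullet_l)=1$,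 $\mathfrak{h}([\tau_1,\dots,\tau_\kappa]_l)=1+\max_j\mathfrak{h}(\tau_j)$; ramification: $\mathfrak{r}(\emptyset)=0$, $\mathfrak{r}(\bullet_l)=1$, $\mathfrak{r}([\tau_1]_l)=\mathfrak{r}(\tau_1)$, $\mathfrak{r}([\tau_1,\dots,\tau_\kappa]_l)=1+\max_j\mathfrak{r}(\tau_j)$ for $\kappa\ge2$; doubling index: $\mathfrak{d}(\emptyset)=0$, $\mathfrak{d}(\bullet_l)=1$, $\mathfrak{d}([\tau_1,\dots,\tau_\kappa]_l)=M$ if exactly one $i$ has $\mathfrak{d}(\tau_i)=M:=\max_j\mathfrak{d}(\tau_j)$, and $M+1$ if at least two indices $i$ have $\mathfrak{d}(\tau_i)=M$. *)

theory Defs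
  imports Main Complex_Main
begin

text \<open>Node l ts is the tree [ts]_l with root colour l.
 Children are stored as a list; all functions below are invariant under
 permutation of the children, so this models unordered trees.\<close>
datatype ctree = Empty | Node nat "ctree list"

fun wf_tree :: "nat \<Rightarrow> ctree \<Rightarrow> bool" where
  "wf_tree m Empty = True"
| "wf_tree m (Node l ts) = (l \<le> m \<and> (\<forall>t\<in>set ts. t \<noteq> Empty \<and> wf_tree m t))"

fun rho :: "ctree \<Rightarrow> real" where
  "rho Empty = 0"
| "rho (Node l ts) = sum_list (map rho ts) + (if l = 0 then 1 else 1/2)"

fun height :: "ctree \<Rightarrow> nat" where
  "height Empty = 0"
| "height (Node l ts) = 1 + Max (insert 0 (set (map height ts)))"

fun ramif :: "ctree \<Rightarrow> nat" where
  "ramif Empty = 0"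
| "ramif (Node l []) = 1"
| "ramif (Node l [t]) = ramif t"
| "ramif (Node l (t1 # t2 # ts)) = 1 + Max (insert 0 (set (map ramif (t1 # t2 # ts))))"

fun doubling :: "ctree \<Rightarrow> nat" where
  "doubling Empty = 0"
| "doubling (Node l ts) =
     (if ts = [] then 1
      else (let M = Max (insert 0 (set (map doubling ts))) in
            if length (filter (\<lambda>t. doubling t = M) ts) \<ge> 2 then M + 1 else M))"

text \<open>Trees in U_f: u = [ts]_f, represented by the list ts of its (nonempty) subtrees.\<close>
definition wf_U :: "nat \<Rightarrow> ctree list \<Rightarrow> bool" where
  "wf_U m ts = (\<forall>t\<in>set ts. t \<noteq> Empty \<and> wf_tree m t)"

definition rhoU :: "ctree list \<Rightarrow> real" where
  "rhoU ts = sum_list (map rho ts)"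

definition primeU :: "(ctree \<Rightarrow> nat) \<Rightarrow> ctree list \<Rightarrow> nat" where
  "primeU g ts = Max (insert 0 (set (map g ts)))"

end

theory Submission
  imports Defs
begin

lemma rho_nonneg: "rho t \<ge> 0"
proof (induction t)
  case Empty then show ?case by simp
next
  case (Node l ts)
  have "sum_list (map rho ts) \<ge> 0"
    using Node by (induction ts) auto
  then show ?case by simp
qed

lemma lin1: "x = y \<Longrightarrow> S = r + R \<Longrightarrow> y - 1/2 \<le> r \<Longrightarrow> 1/2 \<le> R \<Longrightarrow> x \<le> (S::real)"
  by linarith

lemma lin3: "x \<le> S \<Longrightarrow> a = 1 + x \<Longrightarrow> S + 1/2 \<le> r \<Longrightarrow> real a - 1/2 \<le> (r::real)"
  by simp

lemma lin4: "2 * ((P - 1)/2) \<le> F \<Longrightarrow> F \<le> S \<Longrightarrow> P - 1 \<le> (S::real)"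
  by simp

lemma lin2: "L * A \<le> S \<Longrightarrow> 1 \<le> P \<Longrightarrow> 2 \<le> L \<Longrightarrow> A = (P - 1)/2 \<Longrightarrow> 2 * A \<le> (S::real)"
proof -
  assume a: "L * A \<le> S" "1 \<le> P" "2 \<le> L" "A = (P - 1)/2"
  then have "A \<ge> 0" by simp
  then have "2 * A \<le> L * A" using a(3) mult_right_mono by blast
  then show ?thesis using a(1) by linarith
qed

lemma sum_nonneg: "0 \<le> sum_list (map rho xs)"
  by (induction xs) (auto simp: rho_nonneg)

lemma sum_ge_mem: "(x::ctree) \<in> set xs \<Longrightarrow> rho x \<le> sum_list (map rho xs)"
proof (induction xs)
  case Nil then show ?case by simp
next
  case (Cons a xs)
  then show ?case using rho_nonneg[of a] rho_nonneg[of x] sum_nonneg[of xs]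
    by auto
qed

lemma sum_ge_filter: "sum_list (map rho (filter P xs)) \<le> sum_list (map rho xs)"
  by (induction xs) (auto simp: rho_nonneg add_increasing)

lemma sum_ge_len: "(\<And>x. x \<in> set xs \<Longrightarrow> c \<le> rho x) \<Longrightarrow> real (length xs) * c \<le> sum_list (map rho xs)"
  by (induction xs) (auto simp: algebra_simps add_mono)

lemma nonempty_half: "t \<noteq> Empty \<Longrightarrow> rho t \<ge> 1/2"
  by (cases t) (auto simp: sum_nonneg add_increasing)

lemma max_in: "Max (insert 0 (set (map (g::ctree\<Rightarrow>nat) ts))) = 0 \<or> (\<exists>t\<in>set ts. Max (insert 0 (set (map g ts))) = g t)"
proof -
  have "Max (insert 0 (set (map g ts))) \<in> insert 0 (set (map g ts))"
    by (rule Max_in) auto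
  then show ?thesis by auto
qed

lemma max_ge: "t \<in> set ts \<Longrightarrow> (g::ctree\<Rightarrow>nat) t \<le> Max (insert 0 (set (map g ts)))"
  by (rule Max_ge) auto

lemma height_bound: "wf_tree m t \<Longrightarrow> rho t \<ge> real (height t) / 2"
proof (induction t)
  case Empty then show ?case by simp
next
  case (Node l ts)
  let ?M = "Max (insert 0 (set (map height ts)))"
  have "real ?M / 2 \<le> sum_list (map rho ts)"
    using max_in[of height ts]
  proof
    assume "?M = 0" then show ?thesis by (simp add: sum_nonneg)
  next
    assume "\<exists>t\<in>set ts. ?M = height t"
    then obtain t where t: "t \<in> set ts" "?M = height t" by blast
    then have "real (height t)/2 \<le> rho t" using Node by auto
    then show ?thesis using t sum_ge_mem[OF t(1)] by simp
  qed
  then show ?case by (auto simp: field_simps)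
qed

lemma ramif_bound: "wf_tree m t \<Longrightarrow> rho t \<ge> real (ramif t) - 1/2"
proof (induction t rule: ramif.induct)
  case 1 then show ?case by simp
next
  case (2 l) then show ?case by simp
next
  case (3 l t) then show ?case using rho_nonneg[of t] by auto
next
  case (4 l t1 t2 ts)
  let ?xs = "t1 # t2 # ts"
  let ?M = "Max (insert 0 (set (map ramif ?xs)))"
  have wf: "\<And>t. t \<in> set ?xs \<Longrightarrow> wf_tree m t \<and> t \<noteq> Empty" using 4 by auto
  have "real ?M \<le> sum_list (map rho ?xs)"
    using max_in[of ramif ?xs]
  proof
    assume "?M = 0"
    then show ?thesis using nonempty_half[of t1] wf[of t1] rho_nonneg[of t2]
        sum_nonneg[of ts] by auto
  next
    assume "\<exists>t\<in>set ?xs. ?M = ramif t"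
    then obtain t where t: "t \<in> set ?xs" "?M = ramif t" by blast
    then have h1: "real (ramif t) - 1/2 \<le> rho t" using 4 wf by auto
    have eq: "sum_list (map rho ?xs) = rho t + sum_list (map rho (remove1 t ?xs))"
      by (rule sum_list_map_remove1[OF t(1)])
    have "length (remove1 t ?xs) \<ge> 1" using t(1) by (simp add: length_remove1)
    then obtain s where s: "s \<in> set (remove1 t ?xs)"
      by (cases "remove1 t ?xs") auto
    then have "s \<in> set ?xs" using set_remove1_subset by fastforce
    then have "rho s \<ge> 1/2" using wf nonempty_half by blast
    then have hh: "sum_list (map rho (remove1 t ?xs)) \<ge> 1/2" using sum_ge_mem[OF s] by linarith
    have xy: "real ?M = real (ramif t)" using t(2) by simp
    show ?thesis by (rule lin1[OF xy eq h1 hh])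
  qed
  note m1 = this
  have m2: "ramif (Node l ?xs) = 1 + ?M" by (simp only: ramif.simps)
  have m3: "rho (Node l ?xs) \<ge> sum_list (map rho ?xs) + 1/2"
    by (simp only: rho.simps) simp
  show ?case by (rule lin3[OF m1 m2 m3])
qed

lemma doubling_bound: "wf_tree m t \<Longrightarrow> 2 * rho t + 1 \<ge> 2 ^ doubling t"
proof (induction t)
  case Empty then show ?case by simp
next
  case (Node l ts)
  show ?case
  proof (cases "ts = []")
    case True then show ?thesis by simp
  next
    case False
    let ?M = "Max (insert 0 (set (map doubling ts)))"
    have IH: "\<And>t. t \<in> set ts \<Longrightarrow> 2 * rho t + 1 \<ge> 2 ^ doubling t" using Node by auto
    obtain t0 where t0: "t0 \<in> set ts" using False by (cases ts) auto
    have mx: "\<exists>t\<in>set ts. ?M = doubling t"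
      using max_in[of doubling ts] t0 max_ge[OF t0, of doubling] by (metis le_zero_eq)
    then obtain t where t: "t \<in> set ts" "?M = doubling t" by blast
    show ?thesis
    proof (cases "length (filter (\<lambda>t. doubling t = ?M) ts) \<ge> 2")
      case True
      let ?f = "filter (\<lambda>t. doubling t = ?M) ts"
      have "((2::real) ^ ?M - 1)/2 \<le> rho x" if xf: "x \<in> set ?f" for x
      proof -
        have "x \<in> set ts" "doubling x = ?M" using xf by auto
        then have "2 ^ ?M \<le> 2 * rho x + 1" using IH by metis
        then show ?thesis by simp
      qed
      from sum_ge_len[OF this] have "real (length ?f) * ((2 ^ ?M - 1)/2) \<le> sum_list (map rho ?f)" .
      moreover have "(2::real)^?M \<ge> 1" by simp
      moreover have "real (length ?f) \<ge> 2" using True by simp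
      ultimately have "2 * ((2 ^ ?M - 1)/2) \<le> sum_list (map rho ?f)"
        by (rule lin2) auto
      then have "2 ^ ?M - 1 \<le> sum_list (map rho ts)" by (rule lin4[OF _ sum_ge_filter])
      then show ?thesis using True False by (simp add: Let_def)
    next
      case nt: False
      have "2 * rho t + 1 \<ge> 2 ^ ?M" using IH[OF t(1)] t(2) by metis
      then have "2 * sum_list (map rho ts) + 1 \<ge> 2 ^ ?M" using sum_ge_mem[OF t(1)] by linarith
      then show ?thesis using nt False by (simp add: Let_def)
    qed
  qed
qed

lemma tree_nonempty_of_pos: "t = Empty \<Longrightarrow> height t = 0 \<and> ramif t = 0 \<and> doubling t = 0"
  by simp

theorem mainTheorem6:
  fixes m k :: nat
  assumes "k \<ge> 1"
  shows "(\<forall>\<tau>. wf_tree m \<tau> \<longrightarrow>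
            (height \<tau> = k \<longrightarrow> rho \<tau> \<ge> real k / 2) \<and>
            (ramif \<tau> = k \<longrightarrow> rho \<tau> \<ge> real k - 1/2) \<and>
            (doubling \<tau> = k \<longrightarrow> rho \<tau> \<ge> 2 ^ (k - 1) - 1/2))
       \<and> (\<forall>u. wf_U m u \<longrightarrow>
            (primeU height u = k \<longrightarrow> rhoU u \<ge> real k / 2) \<and>
            (primeU ramif u = k \<longrightarrow> rhoU u \<ge> real k - 1/2) \<and>
            (primeU doubling u = k \<longrightarrow> rhoU u \<ge> 2 ^ (k - 1) - 1/2))"
proof -
  have dconv: "rho t \<ge> 2 ^ (k - 1) - 1/2" if "wf_tree m t" "doubling t = k" for t
  proof -
    have "2 * rho t + 1 \<ge> 2 ^ k" using doubling_bound[OF that(1)] that(2) by simp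
    moreover have "(2::real) ^ k = 2 * 2 ^ (k - 1)" using assms
      by (metis Suc_diff_1 less_le_trans zero_less_one power_Suc)
    ultimately show ?thesis by linarith
  qed
  have A: "\<forall>\<tau>. wf_tree m \<tau> \<longrightarrow>
            (height \<tau> = k \<longrightarrow> rho \<tau> \<ge> real k / 2) \<and>
            (ramif \<tau> = k \<longrightarrow> rho \<tau> \<ge> real k - 1/2) \<and>
            (doubling \<tau> = k \<longrightarrow> rho \<tau> \<ge> 2 ^ (k - 1) - 1/2)"
    using height_bound ramif_bound dconv by blast
  have B: "rhoU u \<ge> c" if W: "wf_U m u" and P: "primeU g u = k"
      and G: "\<And>t. wf_tree m t \<Longrightarrow> g t = k \<Longrightarrow> rho t \<ge> c" for u g c
  proof -
    have "primeU g u = 0 \<or> (\<exists>t\<in>set u. primeU g u = g t)"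
      using max_in[of g u] unfolding primeU_def by blast
    then obtain t where t: "t \<in> set u" "g t = k" using P assms by auto
    then have "rho t \<ge> c" using W G unfolding wf_U_def by blast
    then show ?thesis using sum_ge_mem[OF t(1)] unfolding rhoU_def by linarith
  qed
  show ?thesis
  proof (intro conjI A allI impI)
    fix u assume W: "wf_U m u"
    show "primeU height u = k \<Longrightarrow> rhoU u \<ge> real k / 2" using B[OF W] A by blast
    show "primeU ramif u = k \<Longrightarrow> rhoU u \<ge> real k - 1/2" using B[OF W] A by blast
    show "primeU doubling u = k \<Longrightarrow> rhoU u \<ge> 2 ^ (k - 1) - 1/2" using B[OF W] A by blast
  qed
qed

end
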